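(* Fix $n\ge 1$ and $p\ge 1$. Let $\{A^t\}_{t\ge 0}$ be a sequence of couplings of positive integral diamonds of Dynkin type $\mathbb{A}_n$ which is a $p$-cycle ($A^{t+p}=A^t$ for all $t$), considered through its terms $A^0,\dots,A^{2p-1}$. For $0\le i\le p-1$ consider the subsequence $\{B^{s}_{(i)}\}_{0\le s\le p-1}$ with $B^{s}_{(i)}=A^{i+s}$, and its infinite array $C^{(i)}=(c^{(i)}_{r,j})_{r\in\mathbb{Z},0\le j\le n+1}$ given by $c^{(i)}_{(s+1)+kp,\,j}=a^{i+s}_{1,j}$ ($0\le s\le p-1$, $k\in\mathbb{Z}$, $1\le j\le n$) and $c^{(i)}_{r,0}=c^{(i)}_{r,n+1}=1$. Then, for all $0\le i\le p-1$, these subsequences generate the same frieze pattern of order $n+3$.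
   Context: An $\mathbb{A}_n$-diamond over an integral domain $\mathbf{R}$ is a family $A=(a_{i,j})$ of elements of $\mathbf{R}$, with $a_{1,j}$ for $1\le j\le n+1$ and $a_{2,j}$ for $0\le j\le n$, such that (D1) $a_{2,0}=a_{1,n+1}=1$ and (D2) $a_{1,j}a_{2,j}-a_{2,j-1}a_{1,j+1}=1$ for $1\le j\le n$. For $\mathbf{R}=\mathbb{Z}$, $A$ is a positive integral diamond of Dynkin type $\mathbb{A}_n$ if it also satisfies (D3): there are integers $a,m_a$ with $1\le a\le\lfloor (n+2)/2\rfloor$ such that either $(a_{1,1},a_{2,1})=(a,a+m_a)$ or $(a_{1,1},a_{2,1})=(a+m_a,a)$, and $a_{1,2}=a^2+am_a-1$, where $1\le m_1\le n$ when $a=1$ and $0\le m_a\le n+2(1-a)$ when $a>1$. $A\models B$ (coupling) means $a_{2,j}=b_{1,j}$ for $1\le j\le n$; a sequence of couplings is $\{A^t\}_{t\ge0}$ with $A^t\models A^{t+1}$ for all $t$, and we write $A^t=(a^t_{i,j})$. An array $(c_{r,j})_{r\in\mathbb{Z},0\le j\le n+1}$ with $c_{r,0}=c_{r,n+1}=1$ is a frieze pattern of order $n+3$ if $c_{r,j}c_{r+1,j}-c_{r+1,j-1}c_{r,j+1}=1$ for all $r\in\mathbb{Z}$, $1\le j\le n$ (i.e. placing $c_{r,j}$ in row $j$, column $2r+j$, bordered by rows of zeros, yields a closed Coxeter frieze pattern). Two such arrays are regarded as the same frieze pattern if one is obtained from the other by a translation of the index $r$. *)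

theory Defs
  imports Main
begin

text \<open>A diamond is represented as a function a :: nat => nat => int, where a 1 j and a 2 j
are the entries a_{1,j} (1 <= j <= n+1) and a_{2,j} (0 <= j <= n); other values are irrelevant.\<close>

type_synonym diamond = "nat \<Rightarrow> nat \<Rightarrow> int"

definition is_diamond :: "nat \<Rightarrow> diamond \<Rightarrow> bool" where
  "is_diamond n a \<longleftrightarrow>
     a 2 0 = 1 \<and> a 1 (n+1) = 1 \<and>
     (\<forall>j. 1 \<le> j \<and> j \<le> n \<longrightarrow> a 1 j * a 2 j - a 2 (j-1) * a 1 (j+1) = 1)"

definition pos_int_diamond :: "nat \<Rightarrow> diamond \<Rightarrow> bool" where
  "pos_int_diamond n a \<longleftrightarrow> is_diamond n a \<and>
     (\<exists>(x::int) (m::int). 1 \<le> x \<and> x \<le> (int n + 2) div 2 \<and>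
        ((a 1 1 = x \<and> a 2 1 = x + m) \<or> (a 1 1 = x + m \<and> a 2 1 = x)) \<and>
        a 1 2 = x^2 + x*m - 1 \<and>
        (if x = 1 then 1 \<le> m \<and> m \<le> int n else 0 \<le> m \<and> m \<le> int n + 2*(1 - x)))"

definition coupling :: "nat \<Rightarrow> diamond \<Rightarrow> diamond \<Rightarrow> bool" where
  "coupling n a b \<longleftrightarrow> (\<forall>j. 1 \<le> j \<and> j \<le> n \<longrightarrow> a 2 j = b 1 j)"

definition diamond_eq :: "nat \<Rightarrow> diamond \<Rightarrow> diamond \<Rightarrow> bool" where
  "diamond_eq n a b \<longleftrightarrow> (\<forall>j. 1 \<le> j \<and> j \<le> n+1 \<longrightarrow> a 1 j = b 1 j) \<and>
                         (\<forall>j. j \<le> n \<longrightarrow> a 2 j = b 2 j)"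

definition frieze_pattern :: "nat \<Rightarrow> (int \<Rightarrow> nat \<Rightarrow> int) \<Rightarrow> bool" where
  "frieze_pattern n c \<longleftrightarrow> (\<forall>r. c r 0 = 1 \<and> c r (n+1) = 1) \<and>
     (\<forall>r j. 1 \<le> j \<and> j \<le> n \<longrightarrow> c r j * c (r+1) j - c (r+1) (j-1) * c r (j+1) = 1)"

definition same_frieze :: "nat \<Rightarrow> (int \<Rightarrow> nat \<Rightarrow> int) \<Rightarrow> (int \<Rightarrow> nat \<Rightarrow> int) \<Rightarrow> bool" where
  "same_frieze n c d \<longleftrightarrow> (\<exists>k::int. \<forall>r j. j \<le> n+1 \<longrightarrow> c r j = d (r + k) j)"

text \<open>The array C^(i): c_{(s+1)+kp, j} = a^{i+s}_{1,j}, borders 1.\<close>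
definition sub_array :: "nat \<Rightarrow> nat \<Rightarrow> (nat \<Rightarrow> diamond) \<Rightarrow> nat \<Rightarrow> int \<Rightarrow> nat \<Rightarrow> int" where
  "sub_array n p A i r j =
     (if j = 0 \<or> j = n+1 then 1 else A (i + nat ((r - 1) mod int p)) 1 j)"

end

theory Submission
  imports Defs
begin

lemma shift_lemma:
  assumes p: "p \<ge> 1" and ip: "i < p" and per: "\<forall>t. diamond_eq n (A (t+p)) (A t)"
    and j: "1 \<le> j" "j \<le> n+1"
  shows "A (i + nat ((r - 1) mod int p)) 1 j = A (nat ((r + int i - 1) mod int p)) 1 j"
proof -
  define a where "a = (r - 1) mod int p"
  define b where "b = (r + int i - 1) mod int p"
  have a0: "0 \<le> a" "a < int p" using p by (auto simp: a_def)
  have b0: "0 \<le> b" "b < int p" using p by (auto simp: b_def)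
  have m: "(int i + a) mod int p = b" unfolding a_def b_def by (simp add: mod_add_right_eq algebra_simps)
  define q where "q = (int i + a) div int p"
  have e: "int i + a = b + int p * q"
    using m unfolding q_def by (metis div_mult_mod_eq add.commute mult.commute)
  have "q \<ge> 0" using a0 p unfolding q_def by (simp add: pos_imp_zdiv_nonneg_iff)
  moreover have "q < 2"
  proof -
    have "int i + a < int p * 2" using a0 ip by simp
    then have "int p * q < int p * 2" using e b0 by linarith
    then show ?thesis by (simp add: mult_less_cancel_left)
  qed
  ultimately have "q = 0 \<or> q = 1" by auto
  then have "int i + a = b \<or> int i + a = b + int p" using e by auto
  then show ?thesis
  proof
    assume "int i + a = b"
    then have "i + nat a = nat b" using a0 by simp
    then show ?thesis unfolding a_def b_def by simp
  next
    assume "int i + a = b + int p"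
    then have "i + nat a = nat b + p" using a0 b0 by simp
    moreover have "A (nat b + p) 1 j = A (nat b) 1 j" using per j unfolding diamond_eq_def by blast
    ultimately show ?thesis unfolding a_def b_def by simp
  qed
qed

lemma next_lemma:
  assumes p: "p \<ge> 1" and per: "\<forall>t. diamond_eq n (A (t+p)) (A t)"
    and cp: "\<forall>t. coupling n (A t) (A (t+1))"
    and j: "1 \<le> j" "j \<le> n"
  shows "A (i + nat (r mod int p)) 1 j = A (i + nat ((r - 1) mod int p)) 2 j"
proof -
  define a where "a = (r - 1) mod int p"
  define b where "b = r mod int p"
  have a0: "0 \<le> a" "a < int p" using p by (auto simp: a_def)
  have b0: "0 \<le> b" "b < int p" using p by (auto simp: b_def)
  have m: "(a + 1) mod int p = b" unfolding a_def b_def by (simp add: mod_add_left_eq)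
  have "a + 1 = b \<or> a + 1 = int p \<and> b = 0"
  proof (cases "a + 1 < int p")
    case True then show ?thesis using m a0 by simp
  next
    case False then have "a + 1 = int p" using a0 by simp
    then show ?thesis using m by simp
  qed
  have c: "A (i + nat a + 1) 1 j = A (i + nat a) 2 j" using cp j unfolding coupling_def by metis
  show ?thesis
  proof (cases "a + 1 = b")
    case True
    then have "i + nat b = i + nat a + 1" using a0 by simp
    then show ?thesis using c unfolding a_def b_def by simp
  next
    case False
    then have "a + 1 = int p" "b = 0" using \<open>a + 1 = b \<or> _\<close> by auto
    then have "i + nat a + 1 = i + p" using a0 by simp
    moreover have "A (i + p) 1 j = A i 1 j" using per j unfolding diamond_eq_def by simp
    ultimately have "A (i + nat a) 2 j = A i 1 j" using c by metis
    then show ?thesis using \<open>b = 0\<close> unfolding a_def b_def by simp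
  qed
qed

theorem proposition6:
  fixes n p :: nat and A :: "nat \<Rightarrow> diamond"
  assumes "n \<ge> 1" and "p \<ge> 1"
    and "\<forall>t. pos_int_diamond n (A t)"
    and "\<forall>t. coupling n (A t) (A (t+1))"
    and "\<forall>t. diamond_eq n (A (t+p)) (A t)"
  shows "\<forall>i < p. frieze_pattern n (sub_array n p A i) \<and>
                 same_frieze n (sub_array n p A i) (sub_array n p A 0)"
proof (intro allI impI conjI)
  fix i assume ip: "i < p"
  show "frieze_pattern n (sub_array n p A i)"
    unfolding frieze_pattern_def
  proof (intro allI impI conjI)
    fix r :: int and j :: nat assume j: "1 \<le> j \<and> j \<le> n"
    define t where "t = i + nat ((r - 1) mod int p)"
    have D: "is_diamond n (A t)" using assms(3) unfolding pos_int_diamond_def by blast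
    then have d: "A t 1 j * A t 2 j - A t 2 (j-1) * A t 1 (j+1) = 1"
      using j unfolding is_diamond_def by blast
    have nx: "\<And>k. 1 \<le> k \<Longrightarrow> k \<le> n \<Longrightarrow> sub_array n p A i (r+1) k = A t 2 k"
      unfolding sub_array_def t_def
      using next_lemma[OF assms(2) assms(5) assms(4)] by simp
    have e1: "sub_array n p A i r j = A t 1 j" using j unfolding sub_array_def t_def by simp
    have e2: "sub_array n p A i (r+1) j = A t 2 j" using nx j by simp
    have e3: "sub_array n p A i (r+1) (j-1) = A t 2 (j-1)"
    proof (cases "j = 1")
      case True then show ?thesis using D unfolding sub_array_def is_diamond_def by simp
    next
      case False
      then have "1 \<le> j-1" "j-1 \<le> n" using j by auto
      then show ?thesis using nx[of "j-1"] by simp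
    qed
    have e4: "sub_array n p A i r (j+1) = A t 1 (j+1)"
    proof (cases "j = n")
      case True then show ?thesis using D unfolding sub_array_def is_diamond_def by simp
    next
      case False then show ?thesis using j unfolding sub_array_def t_def by simp
    qed
    show "sub_array n p A i r j * sub_array n p A i (r + 1) j -
          sub_array n p A i (r + 1) (j - 1) * sub_array n p A i r (j + 1) = 1"
      using d e1 e2 e3 e4 by simp
  qed (simp_all add: sub_array_def)
  show "same_frieze n (sub_array n p A i) (sub_array n p A 0)"
    unfolding same_frieze_def
  proof (intro exI[of _ "int i"] allI impI)
    fix r :: int and j :: nat assume "j \<le> n+1"
    then show "sub_array n p A i r j = sub_array n p A 0 (r + int i) j"
      unfolding sub_array_def
      using shift_lemma[OF assms(2) ip assms(5), of j r] by simp
  qed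
qed

end
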